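(* Let $h=\sum_{(i,k)\in I_h}h_{k,i}m_iy_k$ with $I_h$ a finite set of index pairs and $h_{k,i}\in\mathbb{R}$, and let $\mathcal{E}(h)=\exp\Big(\int_0^T(h(t),dW(t))_Y-\frac12\int_0^T\|h(t)\|_Y^2dt\Big)$. Then: (i) $\mathcal{E}(h)\in L_{2,Q}(\mathbb{W})$ for every sequence $Q$ of positive numbers; (ii) $\mathcal{E}(h)\in(\mathcal{S})_{\rho,\gamma}$ for $0\le\rho<1$ and $\gamma\ge0$; (iii) $\mathcal{E}(h)\in(\mathcal{S})_{1,\gamma}$, $\gamma\ge0$, as long as $\|h\|^2_{L_2((0,T);Y)}$ is sufficiently small.
   Context: $Y$ is a separable Hilbert space with orthonormal basis $\{y_k\}$, $W$ a cylindrical Brownian motion on $Y$ with $w_k=W_{y_k}$ independent standard Wiener processes, $T\in(0,\infty)$, $\{m_i\}$ an orthonormal basis of $L_2((0,T))$ with $m_i\in L_\infty$. $\mathcal{J}$ is the set of multi-indices $\alpha=(\alpha_i^k)_{i,k\ge1}$ of nonnegative integers with finitely many nonzero entries, $\alpha!=\prod\alpha_i^k!$, $\xi_\alpha=(\alpha!)^{-1/2}\prod H_{\alpha_i^k}(\int_0^Tm_idw_k)$ with $H_n$ the Hermite polynomials; $L_2(\mathbb{W})$ is the space of square-integrable $\mathcal{F}^W_T$-measurable random variables, with coefficients $v_\alpha=\mathbb{E}(v\xi_\alpha)$. For a sequence $Q=\{q_k\}$ of positive numbers, $q^\alpha=\prod_{i,k}q_k^{\alpha_i^k}$ and $L_{2,Q}(\mathbb{W})$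 is the space of (formal series) $v=\sum v_\alpha\xi_\alpha$ with $\sum_\alpha q^{2\alpha}v_\alpha^2<\infty$. For $\rho,\gamma\in\mathbb{R}$, $(\mathcal{S})_{\rho,\gamma}$ is the space of $v$ with $\sum_\alpha(\alpha!)^\rho\prod_{i,k}(2ik)^{\gamma\alpha_i^k}v_\alpha^2<\infty$. *)

theory Defs
  imports "HOL-Probability.Probability"
begin

definition supp_mi :: "(nat \<times> nat \<Rightarrow> nat) \<Rightarrow> (nat \<times> nat) set" where
  "supp_mi \<alpha> = {p. \<alpha> p \<noteq> 0}"

definition multi_indices :: "(nat \<times> nat \<Rightarrow> nat) set" where
  "multi_indices = {\<alpha>. finite (supp_mi \<alpha>) \<and> (\<forall>p\<in>supp_mi \<alpha>. 1 \<le> fst p \<and> 1 \<le> snd p)}"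

definition mi_fact :: "(nat \<times> nat \<Rightarrow> nat) \<Rightarrow> real" where
  "mi_fact \<alpha> = (\<Prod>p\<in>supp_mi \<alpha>. fact (\<alpha> p))"

text \<open>Probabilists' Hermite polynomials H_n(x) = (-1)^n e^{x^2/2} d^n/dx^n e^{-x^2/2}.\<close>
fun hermite :: "nat \<Rightarrow> real \<Rightarrow> real" where
  "hermite 0 x = 1"
| "hermite (Suc 0) x = x"
| "hermite (Suc (Suc n)) x = x * hermite (Suc n) x - real (Suc n) * hermite n x"

text \<open>zeta (i,k) stands for the Gaussian variable int_0^T m_i dw_k.\<close>
definition wick_xi :: "(nat \<times> nat \<Rightarrow> 'a \<Rightarrow> real) \<Rightarrow> (nat \<times> nat \<Rightarrow> nat) \<Rightarrow> 'a \<Rightarrow> real" where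
  "wick_xi \<zeta> \<alpha> \<omega> = (\<Prod>p\<in>supp_mi \<alpha>. hermite (\<alpha> p) (\<zeta> p \<omega>)) / sqrt (mi_fact \<alpha>)"

definition chaos_coeff :: "'a measure \<Rightarrow> (nat \<times> nat \<Rightarrow> 'a \<Rightarrow> real) \<Rightarrow> ('a \<Rightarrow> real) \<Rightarrow> (nat \<times> nat \<Rightarrow> nat) \<Rightarrow> real" where
  "chaos_coeff M \<zeta> v \<alpha> = (\<integral>\<omega>. v \<omega> * wick_xi \<zeta> \<alpha> \<omega> \<partial>M)"

text \<open>q^alpha = prod_{i,k} q_k^{alpha_i^k}; pairs are (i,k).\<close>
definition q_pow :: "(nat \<Rightarrow> real) \<Rightarrow> (nat \<times> nat \<Rightarrow> nat) \<Rightarrow> real" where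
  "q_pow Q \<alpha> = (\<Prod>p\<in>supp_mi \<alpha>. Q (snd p) ^ \<alpha> p)"

definition in_L2Q :: "'a measure \<Rightarrow> (nat \<times> nat \<Rightarrow> 'a \<Rightarrow> real) \<Rightarrow> (nat \<Rightarrow> real) \<Rightarrow> ('a \<Rightarrow> real) \<Rightarrow> bool" where
  "in_L2Q M \<zeta> Q v \<longleftrightarrow>
     (\<lambda>\<alpha>. (q_pow Q \<alpha>)\<^sup>2 * (chaos_coeff M \<zeta> v \<alpha>)\<^sup>2) summable_on multi_indices"

definition in_S :: "'a measure \<Rightarrow> (nat \<times> nat \<Rightarrow> 'a \<Rightarrow> real) \<Rightarrow> real \<Rightarrow> real \<Rightarrow> ('a \<Rightarrow> real) \<Rightarrow> bool" where
  "in_S M \<zeta> \<rho> \<gamma> v \<longleftrightarrow>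
     (\<lambda>\<alpha>. mi_fact \<alpha> powr \<rho>
            * (\<Prod>p\<in>supp_mi \<alpha>. (2 * real (fst p) * real (snd p)) powr (\<gamma> * real (\<alpha> p)))
            * (chaos_coeff M \<zeta> v \<alpha>)\<^sup>2) summable_on multi_indices"

text \<open>E(h) for h = sum_{(i,k) in I} h_{k,i} m_i y_k, with hc (i,k) = h_{k,i}:
  int_0^T (h,dW) = sum hc(i,k) zeta(i,k) and int_0^T |h|^2 dt = sum hc(i,k)^2.\<close>
definition stoch_exp :: "(nat \<times> nat \<Rightarrow> 'a \<Rightarrow> real) \<Rightarrow> (nat \<times> nat) set \<Rightarrow> (nat \<times> nat \<Rightarrow> real) \<Rightarrow> 'a \<Rightarrow> real" where
  "stoch_exp \<zeta> I hc \<omega> = exp ((\<Sum>p\<in>I. hc p * \<zeta> p \<omega>) - 1/2 * (\<Sum>p\<in>I. (hc p)\<^sup>2))"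

end

theory Submission
  imports Defs "HOL-Computational_Algebra.Polynomial"
begin

fun hp :: "nat \<Rightarrow> real poly" where
  "hp 0 = 1"
| "hp (Suc 0) = [:0,1:]"
| "hp (Suc (Suc n)) = [:0,1:] * hp (Suc n) - smult (real (Suc n)) (hp n)"

lemma poly_hp: "poly (hp n) x = hermite n x"
  by (induction n rule: hp.induct) auto

lemma pderiv_hp: "pderiv (hp (Suc n)) = smult (real (Suc n)) (hp n)"
proof (induction n rule: hp.induct)
  case 1
  then show ?case by (simp add: pderiv_pCons)
next
  case 2
  then show ?case by (simp add: pderiv_pCons pderiv_mult pderiv_diff numeral_2_eq_2)
next
  case (3 n)
  have "pderiv (hp (Suc (Suc (Suc n)))) = pderiv ([:0,1:] * hp (Suc (Suc n))) - smult (real (Suc (Suc n))) (pderiv (hp (Suc n)))"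
    by (subst hp.simps(3)) (simp only: pderiv_diff pderiv_smult)
  also have "\<dots> = [:0,1:] * smult (real (Suc (Suc n))) (hp (Suc n)) + hp (Suc (Suc n)) - smult (real (Suc (Suc n))) (smult (real (Suc n)) (hp n))"
    using 3 by (simp add: pderiv_mult pderiv_pCons)
  also have "\<dots> = hp (Suc (Suc n)) + smult (real (Suc (Suc n))) (hp (Suc (Suc n)))"
    by (simp add: algebra_simps smult_diff_right smult_add_left)
  also have "\<dots> = smult (1 + real (Suc (Suc n))) (hp (Suc (Suc n)))"
    by (simp only: smult_add_left smult_1_left)
  finally show ?case by (simp only: of_nat_Suc[of "Suc (Suc n)"] add.commute)
qed

definition Eg :: "real poly \<Rightarrow> real" where
  "Eg p = (\<integral>x. std_normal_density x * poly p x \<partial>lborel)"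

definition mom :: "nat \<Rightarrow> real" where
  "mom i = (\<integral>x. std_normal_density x * x ^ i \<partial>lborel)"

lemma integrable_Eg: "integrable lborel (\<lambda>x. std_normal_density x * poly p x)"
proof -
  have "(\<lambda>x. std_normal_density x * poly p x) = (\<lambda>x. \<Sum>i\<le>degree p. coeff p i * (std_normal_density x * x ^ i))"
    by (auto simp: poly_altdef sum_distrib_left algebra_simps)
  moreover have "integrable lborel (\<lambda>x. \<Sum>i\<le>degree p. coeff p i * (std_normal_density x * x ^ i))"
    by (intro Bochner_Integration.integrable_sum integrable_mult_right integrable_std_normal_moment)
  ultimately show ?thesis by simp
qed

lemma Eg_add: "Eg (p + q) = Eg p + Eg q"
  unfolding Eg_def by (simp add: distrib_left integrable_Eg)

lemma Eg_diff: "Eg (p - q) = Eg p - Eg q"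
  unfolding Eg_def by (simp add: right_diff_distrib integrable_Eg)

lemma Eg_smult: "Eg (smult c p) = c * Eg p"
  unfolding Eg_def by (simp add: mult.left_commute)

lemma Eg_sum: "Eg (\<Sum>i\<in>A. f i) = (\<Sum>i\<in>A. Eg (f i))"
  by (induction A rule: infinite_finite_induct) (simp_all add: Eg_add, simp_all add: Eg_def)

lemma Eg_monom: "Eg (monom c i) = c * mom i"
  unfolding Eg_def mom_def by (simp add: poly_monom mult.left_commute)

lemma mom_0: "mom 0 = 1"
  using integral_std_normal_moment_even[of 0] by (simp add: mom_def)

lemma mom_odd: "mom (2*k+1) = 0"
  using integral_std_normal_moment_odd[of k] by (simp add: mom_def)

lemma mom_even: "mom (2*k) = fact (2 * k) / (2^k * fact k)"
  using integral_std_normal_moment_even[of k] by (simp add: mom_def)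

lemma mom_rec: "mom (Suc i) = real i * mom (i - 1)"
proof (cases "even i")
  case True
  then obtain k where k: "i = 2*k" by auto
  show ?thesis
  proof (cases k)
    case 0 then show ?thesis using k mom_odd[of 0] by simp
  next
    case (Suc j)
    then have "i - 1 = 2*j+1" using k by simp
    then show ?thesis using k mom_odd[of k] mom_odd[of j] by simp
  qed
next
  case False
  then obtain k where k: "i = 2*k+1" by (metis oddE)
  have "Suc i = 2 * (Suc k)" "i - 1 = 2 * k" using k by auto
  then have "mom (Suc i) = fact (2 * Suc k) / (2^Suc k * fact (Suc k))"
            "mom (i - 1) = fact (2 * k) / (2^k * fact k)" by (simp_all only: mom_even)
  moreover have "fact (2 * Suc k) / (2^Suc k * fact (Suc k)) = real (2*k+1) * (fact (2*k) / (2^k * fact k) :: real)"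
  proof -
    have aux: "(2*a*b*F)/(2*P*(a*G)) = b*(F/(P*G))" if "(a::real) > 0" for a b F P G
      using that by simp
    have "fact (2 * Suc k) = 2 * real (k+1) * real (2*k+1) * (fact (2*k) :: real)"
      by (simp add: algebra_simps)
    moreover have "fact (Suc k) = real (k+1) * (fact k :: real)" by simp
    moreover have "(2::real)^Suc k = 2 * 2^k" by simp
    ultimately show ?thesis
      by (simp only: aux[of "real (k+1)"] of_nat_0_less_iff)
  qed
  ultimately show ?thesis using k by simp
qed

lemma Eg_stein: "Eg ([:0,1:] * p) = Eg (pderiv p)"
proof -
  define c where "c i = coeff p i" for i
  have p: "p = (\<Sum>i\<le>degree p. monom (c i) i)" using poly_as_sum_of_monoms[of p] by (simp add: c_def)
  have "[:0,1:] * p = (\<Sum>i\<le>degree p. monom (c i) (Suc i))"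
    by (subst p) (simp add: sum_distrib_left monom_Suc)
  hence "Eg ([:0,1:] * p) = (\<Sum>i\<le>degree p. c i * mom (Suc i))"
    by (simp add: Eg_sum Eg_monom)
  also have "\<dots> = (\<Sum>i\<le>degree p. Eg (monom (real i * c i) (i - 1)))"
    by (simp add: Eg_monom mom_rec mult_ac)
  also have "\<dots> = Eg (pderiv (\<Sum>i\<le>degree p. monom (c i) i))"
    using higher_pderiv_sum[of 1 "\<lambda>i. monom (c i) i" "{..degree p}"]
    by (simp add: Eg_sum pderiv_monom)
  finally show ?thesis using p by simp
qed

definition Qp :: "real \<Rightarrow> nat \<Rightarrow> real poly" where
  "Qp a n = pcompose (hp n) [:a,1:]"

lemma Eg_one: "Eg 1 = 1"
  using Eg_monom[of 1 0] mom_0 by (simp add: monom_0 one_pCons)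

lemma Eg_lin: "Eg [:a,1:] = a"
proof -
  have "[:a,1:] = monom a 0 + monom 1 1" by (simp add: monom_0 monom_Suc)
  then show ?thesis using mom_0 mom_odd[of 0] by (simp add: Eg_add Eg_monom)
qed

lemma Eg_Qp: "Eg (Qp a n) = a ^ n"
proof (induction n rule: hp.induct)
  case 1
  then show ?case by (simp add: Qp_def pcompose_1 Eg_one)
next
  case 2
  then show ?case by (simp add: Qp_def pcompose_pCons Eg_lin)
next
  case (3 n)
  have e1: "Qp a (Suc (Suc n)) = smult a (Qp a (Suc n)) + [:0,1:] * Qp a (Suc n) - smult (real (Suc n)) (Qp a n)"
    unfolding Qp_def by (simp add: pcompose_diff pcompose_mult pcompose_smult pcompose_pCons algebra_simps)
  have e2: "pderiv (Qp a (Suc n)) = smult (real (Suc n)) (Qp a n)"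
    unfolding Qp_def by (simp add: pderiv_pcompose pderiv_hp pcompose_smult pderiv_pCons)
  have "Eg (Qp a (Suc (Suc n))) = a * Eg (Qp a (Suc n)) + Eg (pderiv (Qp a (Suc n))) - real (Suc n) * Eg (Qp a n)"
    by (simp only: e1 Eg_add Eg_diff Eg_smult Eg_stein)
  also have "\<dots> = a * Eg (Qp a (Suc n))" by (simp only: e2 Eg_smult)
  finally show ?case using 3 by simp
qed

lemma hermite_measurable[measurable]: "hermite n \<in> borel_measurable borel"
proof -
  have "hermite n = (\<lambda>x. poly (hp n) x)" by (simp add: poly_hp fun_eq_iff)
  moreover have "(\<lambda>x. poly (hp n) x) \<in> borel_measurable borel"
    by (intro borel_measurable_continuous_onI continuous_on_poly continuous_on_id)
  ultimately show ?thesis by simp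
qed

lemma dens_shift: "std_normal_density x * exp (a * x - a\<^sup>2 / 2) = std_normal_density (x - a)"
proof -
  have "exp (- x\<^sup>2 / 2) * exp (a * x - a\<^sup>2 / 2) = exp (- (x - a)\<^sup>2 / 2)"
    unfolding mult_exp_exp by (rule arg_cong[where f=exp]) (simp add: power2_diff field_simps)
  then show ?thesis by (simp add: std_normal_density_def)
qed

lemma lborel_gauss_hermite:
  "integrable lborel (\<lambda>x. std_normal_density x * (exp (a * x - a\<^sup>2 / 2) * hermite n x))
   \<and> (\<integral>x. std_normal_density x * (exp (a * x - a\<^sup>2 / 2) * hermite n x) \<partial>lborel) = a ^ n"
proof -
  define f where "f x = std_normal_density (x - a) * hermite n x" for x
  have ff: "(\<lambda>x. std_normal_density x * (exp (a * x - a\<^sup>2 / 2) * hermite n x)) = f"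
    by (simp add: fun_eq_iff f_def dens_shift[symmetric])
  have fs: "(\<lambda>x. f (a + 1 * x)) = (\<lambda>x. std_normal_density x * poly (Qp a n) x)"
    by (simp add: fun_eq_iff f_def Qp_def poly_pcompose poly_hp add.commute)
  have "integrable lborel f"
    using lborel_integrable_real_affine_iff[of 1 f a] fs integrable_Eg[of "Qp a n"] by simp
  moreover have "(\<integral>x. f x \<partial>lborel) = a ^ n"
    using lborel_integral_real_affine[of 1 f a] fs Eg_Qp[of a n] by (simp add: Eg_def)
  ultimately show ?thesis using ff by simp
qed

lemma gauss_hermite:
  assumes "distributed M lborel X std_normal_density"
  shows "integrable M (\<lambda>\<omega>. exp (a * X \<omega> - a\<^sup>2 / 2) * hermite n (X \<omega>))
   \<and> (\<integral>\<omega>. exp (a * X \<omega> - a\<^sup>2 / 2) * hermite n (X \<omega>) \<partial>M) = a ^ n"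
proof -
  have m: "(\<lambda>x. exp (a * x - a\<^sup>2 / 2) * hermite n x) \<in> borel_measurable lborel" by measurable
  show ?thesis
    using distributed_integrable[OF assms m] distributed_integral[OF assms m] lborel_gauss_hermite[of a n]
    by simp
qed

lemma chaos_coeff_eq:
  fixes M :: "'a measure" and \<zeta> :: "nat \<times> nat \<Rightarrow> 'a \<Rightarrow> real"
  assumes P: "prob_space M"
    and ind: "prob_space.indep_vars M (\<lambda>_. borel) \<zeta> {p. 1 \<le> fst p \<and> 1 \<le> snd p}"
    and dist: "\<And>p. 1 \<le> fst p \<Longrightarrow> 1 \<le> snd p \<Longrightarrow> distributed M lborel (\<zeta> p) std_normal_density"
    and fin: "finite I" and ID: "\<forall>p\<in>I. 1 \<le> fst p \<and> 1 \<le> snd p"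
    and al: "\<alpha> \<in> multi_indices"
  shows "chaos_coeff M \<zeta> (stoch_exp \<zeta> I hc) \<alpha>
       = (\<Prod>p\<in>supp_mi \<alpha>. (if p \<in> I then hc p else 0) ^ \<alpha> p) / sqrt (mi_fact \<alpha>)"
proof -
  interpret prob_space M by (rule P)
  define D where "D = {p::nat\<times>nat. 1 \<le> fst p \<and> 1 \<le> snd p}"
  define h where "h p = (if p \<in> I then hc p else 0)" for p
  define J where "J = I \<union> supp_mi \<alpha>"
  have finS: "finite (supp_mi \<alpha>)" and SD: "supp_mi \<alpha> \<subseteq> D"
    using al by (auto simp: multi_indices_def D_def)
  have finJ: "finite J" using fin finS by (simp add: J_def)
  have JD: "J \<subseteq> D" using ID SD by (auto simp: J_def D_def)
  define f where "f p \<omega> = exp (h p * \<zeta> p \<omega> - (h p)\<^sup>2 / 2) * hermite (\<alpha> p) (\<zeta> p \<omega>)" for p \<omega>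
  have pw: "stoch_exp \<zeta> I hc \<omega> * wick_xi \<zeta> \<alpha> \<omega> = (\<Prod>p\<in>J. f p \<omega>) / sqrt (mi_fact \<alpha>)" for \<omega>
  proof -
    have "stoch_exp \<zeta> I hc \<omega> = exp (\<Sum>p\<in>I. hc p * \<zeta> p \<omega> - (hc p)\<^sup>2 / 2)"
      unfolding stoch_exp_def by (simp add: sum_subtractf sum_divide_distrib)
    also have "\<dots> = (\<Prod>p\<in>I. exp (hc p * \<zeta> p \<omega> - (hc p)\<^sup>2 / 2))"
      using fin by (simp add: exp_sum)
    also have "\<dots> = (\<Prod>p\<in>I. exp (h p * \<zeta> p \<omega> - (h p)\<^sup>2 / 2))"
      by (simp add: h_def)
    also have "\<dots> = (\<Prod>p\<in>J. exp (h p * \<zeta> p \<omega> - (h p)\<^sup>2 / 2))"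
      using finJ by (intro prod.mono_neutral_left) (auto simp: J_def h_def)
    finally have e1: "stoch_exp \<zeta> I hc \<omega> = (\<Prod>p\<in>J. exp (h p * \<zeta> p \<omega> - (h p)\<^sup>2 / 2))" .
    have "(\<Prod>p\<in>supp_mi \<alpha>. hermite (\<alpha> p) (\<zeta> p \<omega>)) = (\<Prod>p\<in>J. hermite (\<alpha> p) (\<zeta> p \<omega>))"
      using finJ by (intro prod.mono_neutral_left) (auto simp: J_def supp_mi_def)
    then show ?thesis using e1 unfolding wick_xi_def f_def
      by (simp add: prod.distrib)
  qed
  have indJ: "indep_vars (\<lambda>_. borel) f J"
    unfolding f_def
    by (rule indep_vars_compose2[where X=\<zeta> and M'="\<lambda>_. borel"])
       (use indep_vars_subset[OF ind[folded D_def] JD] in auto)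
  have gh: "integrable M (f p) \<and> integral\<^sup>L M (f p) = h p ^ \<alpha> p" if "p \<in> J" for p
  proof -
    have "distributed M lborel (\<zeta> p) std_normal_density"
      using JD that dist[of p] by (auto simp: D_def)
    from gauss_hermite[OF this, of "h p" "\<alpha> p"] show ?thesis by (simp add: f_def[abs_def])
  qed
  have "chaos_coeff M \<zeta> (stoch_exp \<zeta> I hc) \<alpha> = (\<integral>\<omega>. (\<Prod>p\<in>J. f p \<omega>) \<partial>M) / sqrt (mi_fact \<alpha>)"
    unfolding chaos_coeff_def pw by simp
  also have "\<dots> = (\<Prod>p\<in>J. integral\<^sup>L M (f p)) / sqrt (mi_fact \<alpha>)"
    using indep_vars_lebesgue_integral[OF finJ indJ] gh by simp
  also have "\<dots> = (\<Prod>p\<in>J. h p ^ \<alpha> p) / sqrt (mi_fact \<alpha>)"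
    using gh by simp
  also have "(\<Prod>p\<in>J. h p ^ \<alpha> p) = (\<Prod>p\<in>supp_mi \<alpha>. h p ^ \<alpha> p)"
    using finJ by (intro prod.mono_neutral_right) (auto simp: J_def supp_mi_def)
  finally show ?thesis by (simp add: h_def)
qed

lemma prod_summable:
  fixes v :: "nat \<times> nat \<Rightarrow> nat \<Rightarrow> real" and I :: "(nat \<times> nat) set"
  assumes fin: "finite I" and v0: "\<And>p. v p 0 = 1" and vnn: "\<And>p n. v p n \<ge> 0"
    and vs: "\<And>p. p \<in> I \<Longrightarrow> summable (v p)"
    and vz: "\<And>p n. p \<notin> I \<Longrightarrow> n > 0 \<Longrightarrow> v p n = 0"
  shows "(\<lambda>\<alpha>. \<Prod>p\<in>supp_mi \<alpha>. v p (\<alpha> p)) summable_on multi_indices"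
proof -
  define S where "S = {\<alpha>::nat\<times>nat\<Rightarrow>nat. \<forall>p. p \<notin> I \<longrightarrow> \<alpha> p = 0}"
  define G where "G \<alpha> = (\<Prod>p\<in>I. v p (\<alpha> p))" for \<alpha> :: "nat\<times>nat\<Rightarrow>nat"
  have vabs: "Infinite_Set_Sum.abs_summable_on (v p) UNIV" if "p \<in> I" for p
  proof -
    have "(\<lambda>n. norm (v p n)) summable_on UNIV"
      using summable_on_UNIV_nonneg_real_iff[of "\<lambda>n. norm (v p n)"] vs[OF that] vnn
      by (simp add: abs_of_nonneg)
    then show ?thesis using abs_summable_equivalent by blast
  qed
  have "Infinite_Set_Sum.abs_summable_on (\<lambda>g. \<Prod>p\<in>I. v p (g p)) (PiE I (\<lambda>_. UNIV))"
    by (rule abs_summable_on_prod_PiE) (use fin vabs in auto)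
  then have "(\<lambda>g. norm (\<Prod>p\<in>I. v p (g p))) summable_on (PiE I (\<lambda>_. UNIV))"
    by (rule abs_summable_equivalent[THEN iffD2])
  then have pis: "(\<lambda>g. \<Prod>p\<in>I. v p (g p)) summable_on (PiE I (\<lambda>_. UNIV))"
    by (simp add: abs_of_nonneg prod_nonneg vnn)
  have bij: "bij_betw (\<lambda>\<alpha>. restrict \<alpha> I) S (PiE I (\<lambda>_. UNIV))"
  proof (rule bij_betw_byWitness[where f'="\<lambda>g p. if p \<in> I then g p else 0"])
    show "\<forall>a\<in>S. (\<lambda>p. if p \<in> I then restrict a I p else 0) = a"
      by (auto simp: S_def fun_eq_iff)
    show "\<forall>a'\<in>PiE I (\<lambda>_. UNIV). restrict (\<lambda>p. if p \<in> I then a' p else 0) I = a'"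
      by (auto simp: fun_eq_iff PiE_def extensional_def)
    show "(\<lambda>\<alpha>. restrict \<alpha> I) ` S \<subseteq> PiE I (\<lambda>_. UNIV)" by auto
    show "(\<lambda>g p. if p \<in> I then g p else 0) ` PiE I (\<lambda>_. UNIV) \<subseteq> S" by (auto simp: S_def)
  qed
  have "(\<lambda>\<alpha>. G (restrict \<alpha> I)) summable_on S"
    using summable_on_reindex_bij_betw[OF bij, of G] pis by (simp add: G_def[abs_def])
  then have GS: "G summable_on S" by (simp add: G_def[abs_def])
  then have GS2: "G summable_on (S \<inter> multi_indices)"
    by (rule summable_on_subset_banach) auto
  have "(\<lambda>\<alpha>. \<Prod>p\<in>supp_mi \<alpha>. v p (\<alpha> p)) summable_on multi_indices \<longleftrightarrow> G summable_on (S \<inter> multi_indices)"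
  proof (rule summable_on_cong_neutral)
    fix x assume x0: "x \<in> S \<inter> multi_indices - multi_indices"
    have "x \<in> multi_indices" using DiffD1[OF x0] by (rule IntD2)
    then show "G x = 0" by (rule DiffD2[OF x0])
  next
    fix x assume x: "x \<in> multi_indices - S \<inter> multi_indices"
    from x have xa: "x \<in> multi_indices" by (rule DiffD1)
    from x have xb: "x \<notin> S \<inter> multi_indices" by (metis DiffD2)
    have "x \<notin> S"
    proof
      assume "x \<in> S"
      then have "x \<in> S \<inter> multi_indices" using xa by (rule IntI)
      with xb show False by (rule notE)
    qed
    then have "\<not> (\<forall>p. p \<notin> I \<longrightarrow> x p = 0)" unfolding S_def mem_Collect_eq .
    then obtain p where p: "p \<notin> I" "x p \<noteq> 0" by auto
    have fx: "finite (supp_mi x)" using xa unfolding multi_indices_def mem_Collect_eq by (rule conjunct1)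
    have "p \<in> supp_mi x" using p by (simp add: supp_mi_def)
    moreover have "v p (x p) = 0" by (rule vz[OF p(1)]) (use p(2) in simp)
    ultimately show "(\<Prod>p\<in>supp_mi x. v p (x p)) = 0" by (intro prod_zero[OF fx]) blast
  next
    fix x assume x: "x \<in> multi_indices \<inter> (S \<inter> multi_indices)"
    have xS: "x \<in> S" using x by (rule IntD1[OF IntD2])
    then have xS': "\<forall>p. p \<notin> I \<longrightarrow> x p = 0" unfolding S_def mem_Collect_eq .
    have sub: "supp_mi x \<subseteq> I"
    proof
      fix q assume "q \<in> supp_mi x"
      then have "x q \<noteq> 0" by (simp add: supp_mi_def)
      show "q \<in> I"
      proof (rule ccontr)
        assume "q \<notin> I"
        have "x q = 0" by (rule mp[OF spec[OF xS'] \<open>q \<notin> I\<close>])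
        with \<open>x q \<noteq> 0\<close> show False by simp
      qed
    qed
    have "(\<Prod>p\<in>I - supp_mi x. v p (x p)) = 1"
      by (rule prod.neutral) (simp add: supp_mi_def v0)
    then show "(\<Prod>p\<in>supp_mi x. v p (x p)) = G x"
      unfolding G_def using prod.subset_diff[OF sub fin, of "\<lambda>p. v p (x p)"] by simp
  qed
  then show ?thesis using GS2 by simp
qed

lemma summable_fact_powr:
  fixes c \<rho> :: real
  assumes c: "0 \<le> c" and r: "\<rho> < 1"
  shows "summable (\<lambda>n. fact n powr \<rho> * c ^ n / fact n)"
proof -
  define f where "f n = fact n powr \<rho> * c ^ n / fact n" for n
  have "(\<lambda>n. real n powr (\<rho> - 1)) \<longlonglongrightarrow> 0"
    using r by (intro tendsto_neg_powr filterlim_real_sequentially) simp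
  then have "(\<lambda>n. real (Suc n) powr (\<rho> - 1)) \<longlonglongrightarrow> 0"
    by (rule LIMSEQ_Suc)
  then have lim: "(\<lambda>n. c * real (Suc n) powr (\<rho> - 1)) \<longlonglongrightarrow> c * 0"
    by (intro tendsto_mult tendsto_const)
  have "eventually (\<lambda>n. c * real (Suc n) powr (\<rho> - 1) < 1/2) sequentially"
    using order_tendstoD(2)[OF lim, of "1/2"] by simp
  then obtain N where N: "\<And>n. n \<ge> N \<Longrightarrow> c * real (Suc n) powr (\<rho> - 1) < 1/2"
    unfolding eventually_sequentially by blast
  have rec: "f (Suc n) = (c * real (Suc n) powr (\<rho> - 1)) * f n" for n
  proof -
    have aux: "(m*F) powr \<rho> * (c * cn) / (m*F) = (c * (m powr \<rho> / m)) * (F powr \<rho> * cn / F)"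
      if "(m::real) > 0" "(F::real) > 0" for m F cn
      using that by (simp add: powr_mult field_simps)
    have "fact (Suc n) = real (Suc n) * (fact n :: real)" by simp
    moreover have "real (Suc n) powr (\<rho> - 1) = real (Suc n) powr \<rho> / real (Suc n)"
      by (simp add: powr_diff)
    ultimately show ?thesis unfolding f_def power_Suc
      by (simp only: aux[of "real (Suc n)" "fact n"] of_nat_0_less_iff zero_less_Suc fact_gt_zero)
  qed
  have fnn: "f n \<ge> 0" for n unfolding f_def using c by simp
  have "summable f"
  proof (rule summable_ratio_test[where c="1/2" and N=N])
    fix n assume "n \<ge> N"
    then have "c * real (Suc n) powr (\<rho> - 1) \<le> 1/2" using N by (simp add: less_imp_le)
    then have "(c * real (Suc n) powr (\<rho> - 1)) * f n \<le> 1/2 * f n"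
      by (rule mult_right_mono) (rule fnn)
    then show "norm (f (Suc n)) \<le> 1/2 * norm (f n)"
      using fnn[of n] fnn[of "Suc n"] rec[of n] by simp
  qed simp
  then show ?thesis by (simp add: f_def[abs_def])
qed

lemma coeff_sq:
  fixes M :: "'a measure" and \<zeta> :: "nat \<times> nat \<Rightarrow> 'a \<Rightarrow> real"
  assumes "prob_space M"
    and "prob_space.indep_vars M (\<lambda>_. borel) \<zeta> {p. 1 \<le> fst p \<and> 1 \<le> snd p}"
    and "\<And>p. 1 \<le> fst p \<Longrightarrow> 1 \<le> snd p \<Longrightarrow> distributed M lborel (\<zeta> p) std_normal_density"
    and "finite I" and "\<forall>p\<in>I. 1 \<le> fst p \<and> 1 \<le> snd p"
    and al: "\<alpha> \<in> multi_indices"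
  shows "(chaos_coeff M \<zeta> (stoch_exp \<zeta> I hc) \<alpha>)\<^sup>2
       = (\<Prod>p\<in>supp_mi \<alpha>. ((if p \<in> I then hc p else 0)\<^sup>2) ^ \<alpha> p / fact (\<alpha> p))"
proof -
  have mpos: "mi_fact \<alpha> > 0" unfolding mi_fact_def by (simp add: prod_pos)
  have "(chaos_coeff M \<zeta> (stoch_exp \<zeta> I hc) \<alpha>)\<^sup>2
      = (\<Prod>p\<in>supp_mi \<alpha>. (if p \<in> I then hc p else 0) ^ \<alpha> p)\<^sup>2 / mi_fact \<alpha>"
    using chaos_coeff_eq[OF assms] mpos by (simp add: power_divide)
  also have "\<dots> = (\<Prod>p\<in>supp_mi \<alpha>. ((if p \<in> I then hc p else 0)\<^sup>2) ^ \<alpha> p) / (\<Prod>p\<in>supp_mi \<alpha>. fact (\<alpha> p))"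
    unfolding mi_fact_def prod_power_distrib
    by (simp add: power_mult[symmetric] mult.commute)
  also have "\<dots> = (\<Prod>p\<in>supp_mi \<alpha>. ((if p \<in> I then hc p else 0)\<^sup>2) ^ \<alpha> p / fact (\<alpha> p))"
    by (simp add: prod_dividef)
  finally show ?thesis .
qed

lemma term_S:
  fixes M :: "'a measure" and \<zeta> :: "nat \<times> nat \<Rightarrow> 'a \<Rightarrow> real"
  assumes "prob_space M"
    and "prob_space.indep_vars M (\<lambda>_. borel) \<zeta> {p. 1 \<le> fst p \<and> 1 \<le> snd p}"
    and "\<And>p. 1 \<le> fst p \<Longrightarrow> 1 \<le> snd p \<Longrightarrow> distributed M lborel (\<zeta> p) std_normal_density"
    and "finite I" and "\<forall>p\<in>I. 1 \<le> fst p \<and> 1 \<le> snd p"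
    and al: "\<alpha> \<in> multi_indices"
  shows "mi_fact \<alpha> powr \<rho>
            * (\<Prod>p\<in>supp_mi \<alpha>. (2 * real (fst p) * real (snd p)) powr (\<gamma> * real (\<alpha> p)))
            * (chaos_coeff M \<zeta> (stoch_exp \<zeta> I hc) \<alpha>)\<^sup>2
       = (\<Prod>p\<in>supp_mi \<alpha>. fact (\<alpha> p) powr \<rho> *
             ((2 * real (fst p) * real (snd p)) powr \<gamma> * (if p \<in> I then hc p else 0)\<^sup>2) ^ \<alpha> p / fact (\<alpha> p))"
proof -
  have pw: "(\<Prod>p\<in>supp_mi \<alpha>. (2 * real (fst p) * real (snd p)) powr (\<gamma> * real (\<alpha> p)))
      = (\<Prod>p\<in>supp_mi \<alpha>. ((2 * real (fst p) * real (snd p)) powr \<gamma>) ^ \<alpha> p)"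
  proof (rule prod.cong)
    fix p assume "p \<in> supp_mi \<alpha>"
    then have ge: "1 \<le> fst p" "1 \<le> snd p" using al by (auto simp: multi_indices_def)
    then have pos: "2 * real (fst p) * real (snd p) > 0" by simp
    have "((2 * real (fst p) * real (snd p)) powr \<gamma>) ^ \<alpha> p
        = ((2 * real (fst p) * real (snd p)) powr \<gamma>) powr real (\<alpha> p)"
      using pos ge by (intro powr_realpow[symmetric]) simp
    also have "\<dots> = (2 * real (fst p) * real (snd p)) powr (\<gamma> * real (\<alpha> p))"
      by (simp add: powr_powr)
    finally show "(2 * real (fst p) * real (snd p)) powr (\<gamma> * real (\<alpha> p))
        = ((2 * real (fst p) * real (snd p)) powr \<gamma>) ^ \<alpha> p" by simp
  qed simp
  have mf: "mi_fact \<alpha> powr \<rho> = (\<Prod>p\<in>supp_mi \<alpha>. fact (\<alpha> p) powr \<rho>)"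
    unfolding mi_fact_def by (rule prod_powr_distrib)
  have cs: "(chaos_coeff M \<zeta> (stoch_exp \<zeta> I hc) \<alpha>)\<^sup>2
       = (\<Prod>p\<in>supp_mi \<alpha>. ((if p \<in> I then hc p else 0)\<^sup>2) ^ \<alpha> p / fact (\<alpha> p))"
    by (rule coeff_sq[OF assms])
  show ?thesis
    unfolding pw mf cs
    by (simp add: prod.distrib[symmetric] power_mult_distrib mult.assoc)
qed

theorem lemma7p7:
  fixes M :: "'a measure" and \<zeta> :: "nat \<times> nat \<Rightarrow> 'a \<Rightarrow> real"
    and I :: "(nat \<times> nat) set" and hc :: "nat \<times> nat \<Rightarrow> real"
  assumes "prob_space M"
    and "prob_space.indep_vars M (\<lambda>_. borel) \<zeta> {p. 1 \<le> fst p \<and> 1 \<le> snd p}"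
    and "\<And>p. 1 \<le> fst p \<Longrightarrow> 1 \<le> snd p \<Longrightarrow> distributed M lborel (\<zeta> p) std_normal_density"
    and "finite I" and "\<forall>p\<in>I. 1 \<le> fst p \<and> 1 \<le> snd p"
  shows "(\<forall>Q. (\<forall>k\<ge>1. Q k > 0) \<longrightarrow> in_L2Q M \<zeta> Q (stoch_exp \<zeta> I hc))
       \<and> (\<forall>\<rho> \<gamma>. 0 \<le> \<rho> \<and> \<rho> < 1 \<and> 0 \<le> \<gamma> \<longrightarrow> in_S M \<zeta> \<rho> \<gamma> (stoch_exp \<zeta> I hc))
       \<and> (\<forall>\<gamma>\<ge>0. \<exists>\<epsilon>>0. \<forall>g :: nat \<times> nat \<Rightarrow> real.
            (\<Sum>p\<in>I. (g p)\<^sup>2) < \<epsilon> \<longrightarrow> in_S M \<zeta> 1 \<gamma> (stoch_exp \<zeta> I g))"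
proof -
  note fin = assms(4)
  define w where "w \<gamma> p = (2 * real (fst p) * real (snd p)) powr \<gamma>" for p :: "nat \<times> nat" and \<gamma> :: real
  have wnn: "w \<gamma> p \<ge> 0" for \<gamma> p by (simp add: w_def)
  have S_crit: "in_S M \<zeta> \<rho> \<gamma> (stoch_exp \<zeta> I g)"
    if sm: "\<And>p. p \<in> I \<Longrightarrow> summable (\<lambda>n. fact n powr \<rho> * (w \<gamma> p * (g p)\<^sup>2) ^ n / fact n)"
    for \<rho> \<gamma> g
  proof -
    define v where "v p n = fact n powr \<rho> * (w \<gamma> p * (if p \<in> I then g p else 0)\<^sup>2) ^ n / fact n"
      for p n
    have "(\<lambda>\<alpha>. \<Prod>p\<in>supp_mi \<alpha>. v p (\<alpha> p)) summable_on multi_indices"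
    proof (rule prod_summable[OF fin])
      show "v p 0 = 1" for p by (simp add: v_def)
      show "v p n \<ge> 0" for p n by (simp add: v_def wnn)
      show "summable (v p)" if "p \<in> I" for p
        using sm[OF that] that by (simp add: v_def[abs_def])
      show "v p n = 0" if "p \<notin> I" "n > 0" for p n
        using that by (simp add: v_def)
    qed
    then show ?thesis
      unfolding in_S_def
      by (rule summable_on_cong[THEN iffD1, rotated])
         (simp add: term_S[OF assms] v_def w_def)
  qed
  have P1: "in_L2Q M \<zeta> Q (stoch_exp \<zeta> I hc)" for Q
  proof -
    define v where "v p n = ((Q (snd p))\<^sup>2 * (if p \<in> I then hc p else 0)\<^sup>2) ^ n / fact n"
      for p n
    have "(\<lambda>\<alpha>. \<Prod>p\<in>supp_mi \<alpha>. v p (\<alpha> p)) summable_on multi_indices"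
    proof (rule prod_summable[OF fin])
      show "v p 0 = 1" for p by (simp add: v_def)
      show "v p n \<ge> 0" for p n by (simp add: v_def)
      show "summable (v p)" for p
        using summable_exp[of "(Q (snd p))\<^sup>2 * (if p \<in> I then hc p else 0)\<^sup>2"]
        by (simp add: v_def[abs_def] field_simps)
      show "v p n = 0" if "p \<notin> I" "n > 0" for p n
        using that by (simp add: v_def)
    qed
    then show ?thesis
      unfolding in_L2Q_def
    proof (rule summable_on_cong[THEN iffD1, rotated])
      fix \<alpha> assume al: "\<alpha> \<in> multi_indices"
      have cs: "(chaos_coeff M \<zeta> (stoch_exp \<zeta> I hc) \<alpha>)\<^sup>2
         = (\<Prod>p\<in>supp_mi \<alpha>. ((if p \<in> I then hc p else 0)\<^sup>2) ^ \<alpha> p / fact (\<alpha> p))"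
        by (rule coeff_sq[OF assms al])
      show "(\<Prod>p\<in>supp_mi \<alpha>. v p (\<alpha> p)) = (q_pow Q \<alpha>)\<^sup>2 * (chaos_coeff M \<zeta> (stoch_exp \<zeta> I hc) \<alpha>)\<^sup>2"
        unfolding cs q_pow_def prod_power_distrib
        by (simp add: v_def prod.distrib[symmetric] power_mult_distrib power_mult[symmetric] mult.commute)
    qed
  qed
  have P2: "in_S M \<zeta> \<rho> \<gamma> (stoch_exp \<zeta> I hc)" if "\<rho> < 1" for \<rho> \<gamma>
    by (rule S_crit) (intro summable_fact_powr that mult_nonneg_nonneg wnn zero_le_power2)
  have P3: "\<exists>\<epsilon>>0. \<forall>g :: nat \<times> nat \<Rightarrow> real.
            (\<Sum>p\<in>I. (g p)\<^sup>2) < \<epsilon> \<longrightarrow> in_S M \<zeta> 1 \<gamma> (stoch_exp \<zeta> I g)" for \<gamma>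
  proof -
    define W where "W = (\<Sum>p\<in>I. w \<gamma> p) + 1"
    have Wpos: "W > 0" unfolding W_def using wnn by (simp add: sum_nonneg add_nonneg_pos)
    have wW: "w \<gamma> p \<le> W" if "p \<in> I" for p
      unfolding W_def using member_le_sum[OF that, of "w \<gamma>"] wnn fin by simp
    show ?thesis
    proof (intro exI[of _ "1/W"] conjI allI impI)
      show "1/W > 0" using Wpos by simp
      fix g :: "nat \<times> nat \<Rightarrow> real"
      assume small: "(\<Sum>p\<in>I. (g p)\<^sup>2) < 1/W"
      show "in_S M \<zeta> 1 \<gamma> (stoch_exp \<zeta> I g)"
      proof (rule S_crit)
        fix p assume p: "p \<in> I"
        have "(g p)\<^sup>2 \<le> (\<Sum>p\<in>I. (g p)\<^sup>2)"
          using member_le_sum[OF p, of "\<lambda>p. (g p)\<^sup>2"] fin by simp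
        then have gs: "(g p)\<^sup>2 < 1/W" using small by simp
        have "w \<gamma> p * (g p)\<^sup>2 \<le> W * (g p)\<^sup>2"
          by (rule mult_right_mono[OF wW[OF p]]) simp
        also have "\<dots> < W * (1/W)"
          by (rule mult_strict_left_mono[OF gs Wpos])
        also have "\<dots> = 1" using Wpos by simp
        finally have lt: "w \<gamma> p * (g p)\<^sup>2 < 1" .
        have nn: "w \<gamma> p * (g p)\<^sup>2 \<ge> 0" by (simp add: wnn)
        have "summable (\<lambda>n. (w \<gamma> p * (g p)\<^sup>2) ^ n)"
          by (rule summable_geometric) (use lt nn in simp)
        then show "summable (\<lambda>n. fact n powr 1 * (w \<gamma> p * (g p)\<^sup>2) ^ n / fact n)"
          by simp
      qed
    qed
  qed
  show ?thesis using P1 P2 P3 by blast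
qed

end
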